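(* $\mathsf{AP}(R_2,R_1)=\mathsf{AP}(R_3,R_1)=\mathsf{\Omega(1)}$.
   Context: Tuples in $\{0,1\}^4$ are written as strings $abcd$. The relations $R_1,\dots,R_5\subseteq\{0,1\}^4$ are $R_1=\{0000,1000,0100,1100,1010,0110,1001,0101,0011,1011,0111,1111\}$, $R_2=\{0000,1000,0100,1100,1010,0101,0011,1111\}$, $R_3=\{0000,1100,1010,0101,0011,1011,0111,1111\}$, $R_4=\{0000,1100,1010,0101,0011,1111\}$, $R_5=\{0000,1100,1010,0110,1001,0101,0011,1111\}$. For $R,S\subseteq\{0,1\}^4$, a Boolean function $f\colon\{0,1\}^n\to\{0,1\}$ is analogy-preserving relative to $(R,S)$ if for all $\mathbf{a},\mathbf{b},\mathbf{c},\mathbf{d}\in\{0,1\}^n$ with $(a_i,b_i,c_i,d_i)\in R$ for every $i$ and such that $(f(\mathbf{a}),f(\mathbf{b}),f(\mathbf{c}),x)\in S$ for some $x\in\{0,1\}$, we have $(f(\mathbf{a}),f(\mathbf{b}),f(\mathbf{c}),f(\mathbf{d}))\in S$; $\mathsf{AP}(R,S)$ is the set of all such functions of all arities. $\mathsf{\Omega(1)}$ is the set of all Boolean functions (of all arities) that are constant, a projection, or the negation of a projection. *)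

theory Defs
  imports Main
begin

text \<open>A 4-tuple over {0,1}, written abcd in the paper; 1 = True, 0 = False.\<close>
type_synonym tup4 = "bool \<times> bool \<times> bool \<times> bool"

definition bt :: "nat \<Rightarrow> nat \<Rightarrow> nat \<Rightarrow> nat \<Rightarrow> tup4" where
  "bt a b c d = (a = 1, b = 1, c = 1, d = 1)"

definition R1 :: "tup4 set" where
  "R1 = {bt 0 0 0 0, bt 1 0 0 0, bt 0 1 0 0, bt 1 1 0 0, bt 1 0 1 0, bt 0 1 1 0,
         bt 1 0 0 1, bt 0 1 0 1, bt 0 0 1 1, bt 1 0 1 1, bt 0 1 1 1, bt 1 1 1 1}"

definition R2 :: "tup4 set" where
  "R2 = {bt 0 0 0 0, bt 1 0 0 0, bt 0 1 0 0, bt 1 1 0 0, bt 1 0 1 0, bt 0 1 0 1,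
         bt 0 0 1 1, bt 1 1 1 1}"

definition R3 :: "tup4 set" where
  "R3 = {bt 0 0 0 0, bt 1 1 0 0, bt 1 0 1 0, bt 0 1 0 1, bt 0 0 1 1, bt 1 0 1 1,
         bt 0 1 1 1, bt 1 1 1 1}"

definition R4 :: "tup4 set" where
  "R4 = {bt 0 0 0 0, bt 1 1 0 0, bt 1 0 1 0, bt 0 1 0 1, bt 0 0 1 1, bt 1 1 1 1}"

definition R5 :: "tup4 set" where
  "R5 = {bt 0 0 0 0, bt 1 1 0 0, bt 1 0 1 0, bt 0 1 1 0, bt 1 0 0 1, bt 0 1 0 1,
         bt 0 0 1 1, bt 1 1 1 1}"

text \<open>An n-ary Boolean function is represented by f :: bool list => bool together with
  its arity n; only its values on lists of length n matter.\<close>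

definition AP :: "tup4 set \<Rightarrow> tup4 set \<Rightarrow> nat \<Rightarrow> (bool list \<Rightarrow> bool) \<Rightarrow> bool" where
  "AP R S n f \<longleftrightarrow>
     (\<forall>a b c d. length a = n \<longrightarrow> length b = n \<longrightarrow> length c = n \<longrightarrow> length d = n \<longrightarrow>
        (\<forall>i<n. (a ! i, b ! i, c ! i, d ! i) \<in> R) \<longrightarrow>
        (\<exists>x. (f a, f b, f c, x) \<in> S) \<longrightarrow>
        (f a, f b, f c, f d) \<in> S)"

definition Omega1 :: "nat \<Rightarrow> (bool list \<Rightarrow> bool) \<Rightarrow> bool" where
  "Omega1 n f \<longleftrightarrow>
     (\<exists>v. \<forall>x. length x = n \<longrightarrow> f x = v) \<or>
     (\<exists>i<n. \<forall>x. length x = n \<longrightarrow> f x = x ! i) \<or>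
     (\<exists>i<n. \<forall>x. length x = n \<longrightarrow> f x = (\<not> x ! i))"

end

theory Submission
  imports Defs
begin

lemma R1_mem: "((p,q,r,s) \<in> R1) \<longleftrightarrow> (p = q \<longrightarrow> r = s)"
  by (cases p; cases q; cases r; cases s; simp add: R1_def bt_def)

lemma AP_R1: "AP R R1 n f \<longleftrightarrow>
  (\<forall>a b c d. length a = n \<longrightarrow> length b = n \<longrightarrow> length c = n \<longrightarrow> length d = n \<longrightarrow>
        (\<forall>i<n. (a ! i, b ! i, c ! i, d ! i) \<in> R) \<longrightarrow> f a = f b \<longrightarrow> f c = f d)"
  unfolding AP_def R1_mem by blast

lemma lemA:
  assumes ap: "AP R R1 n f"
    and h1: "(True,False,True,False) \<in> R" and h2: "(False,True,False,True) \<in> R"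
    and hv1: "\<forall>p. (v,v,p,p) \<in> R" and hv2: "\<forall>p q. (p,q,v,v) \<in> R"
    and lc: "length c = n" and ld: "length d = n" and lx: "length x = n" and ly: "length y = n"
    and ne: "f c \<noteq> f d"
    and agr: "\<forall>i<n. c!i \<noteq> d!i \<longrightarrow> x!i = c!i \<and> y!i = d!i"
  shows "f x \<noteq> f y"
proof -
  define c0 where "c0 = map (\<lambda>i. if c!i = d!i then v else c!i) [0..<n]"
  define d0 where "d0 = map (\<lambda>i. if c!i = d!i then v else d!i) [0..<n]"
  have A: "\<forall>a b c d. length a = n \<longrightarrow> length b = n \<longrightarrow> length c = n \<longrightarrow> length d = n \<longrightarrow>
        (\<forall>i<n. (a ! i, b ! i, c ! i, d ! i) \<in> R) \<longrightarrow> f a = f b \<longrightarrow> f c = f d"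
    using ap unfolding AP_R1 .
  have col: "\<And>p q :: bool. p \<noteq> q \<Longrightarrow> (p,q,p,q) \<in> R"
  proof -
    fix p q :: bool assume "p \<noteq> q"
    thus "(p,q,p,q) \<in> R" using h1 h2 by (cases p) auto
  qed
  have lc0: "length c0 = n" and ld0: "length d0 = n" by (simp_all add: c0_def d0_def)
  have "(c0 ! i, d0 ! i, c ! i, d ! i) \<in> R" if "i < n" for i
  proof (cases "c!i = d!i")
    case True thus ?thesis using that hv1 by (simp add: c0_def d0_def)
  next
    case False thus ?thesis using that col by (simp add: c0_def d0_def)
  qed
  hence s1: "f c0 \<noteq> f d0" using A[rule_format, OF lc0 ld0 lc ld] ne by blast
  have "(x ! i, y ! i, c0 ! i, d0 ! i) \<in> R" if "i < n" for i
  proof (cases "c!i = d!i")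
    case True thus ?thesis using that hv2 by (simp add: c0_def d0_def)
  next
    case False thus ?thesis using that col agr by (simp add: c0_def d0_def)
  qed
  thus ?thesis using A[rule_format, OF lx ly lc0 ld0] s1 by blast
qed

lemma lemB:
  "\<forall>c d. card {i. i<n \<and> c!i \<noteq> d!i} = k \<longrightarrow> length c = n \<longrightarrow> length d = n \<longrightarrow>
     (f :: bool list \<Rightarrow> bool) c \<noteq> f d \<longrightarrow>
     (\<exists>c' i. length c' = n \<and> i < n \<and> f c' \<noteq> f (c'[i := \<not> c'!i]))"
proof (induction k rule: less_induct)
  case (less k)
  show ?case
  proof (intro allI impI)
    fix c d :: "bool list"
    assume k: "card {i. i<n \<and> c!i \<noteq> d!i} = k" and lc: "length c = n" and ld: "length d = n"
      and ne: "f c \<noteq> f d"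
    have "c \<noteq> d" using ne by auto
    have "\<exists>j<n. c!j \<noteq> d!j"
    proof (rule ccontr)
      assume "\<not> (\<exists>j<n. c!j \<noteq> d!j)"
      hence "c = d" using lc ld by (auto intro: nth_equalityI)
      thus False using \<open>c \<noteq> d\<close> by simp
    qed
    then obtain j where j: "j < n" "c!j \<noteq> d!j" by blast
    define e where "e = d[j := c!j]"
    have le: "length e = n" using ld by (simp add: e_def)
    show "\<exists>c' i. length c' = n \<and> i < n \<and> f c' \<noteq> f (c'[i := \<not> c'!i])"
    proof (cases "f e = f d")
      case False
      have "e[j := \<not> e!j] = d" using j ld by (auto simp: e_def list_update_overwrite)
      thus ?thesis using False le j by metis
    next
      case True
      have ne2: "f c \<noteq> f e" using True ne by simp
      have eq: "{i. i<n \<and> c!i \<noteq> e!i} = {i. i<n \<and> c!i \<noteq> d!i} - {j}"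
        using j ld by (auto simp: e_def nth_list_update)
      have "card ({i. i<n \<and> c!i \<noteq> d!i} - {j}) < card {i. i<n \<and> c!i \<noteq> d!i}"
        by (rule card_Diff1_less) (use j in auto)
      hence "card {i. i<n \<and> c!i \<noteq> e!i} < k" using eq k by simp
      thus ?thesis using less.IH lc le ne2 by blast
    qed
  qed
qed

lemma AP_Omega:
  assumes ap: "AP R R1 n f"
    and h1: "(True,False,True,False) \<in> R" and h2: "(False,True,False,True) \<in> R"
    and hv1: "\<forall>p. (v,v,p,p) \<in> R" and hv2: "\<forall>p q. (p,q,v,v) \<in> R"
  shows "Omega1 n f"
proof (cases "\<exists>c d. length c = n \<and> length d = n \<and> f c \<noteq> f d")
  case False
  hence "\<forall>x. length x = n \<longrightarrow> f x = f (replicate n False)"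
    by (metis length_replicate)
  thus ?thesis unfolding Omega1_def by blast
next
  case True
  then obtain c d where "length c = n" "length d = n" "f c \<noteq> f d" by blast
  then obtain c i where lc: "length c = n" and i: "i < n" and ne: "f c \<noteq> f (c[i := \<not> c!i])"
    using lemB[rule_format, OF refl] by blast
  define d where "d = c[i := \<not> c!i]"
  have ld: "length d = n" using lc by (simp add: d_def)
  have dd: "\<forall>j<n. c!j \<noteq> d!j \<longrightarrow> j = i" unfolding d_def by (metis nth_list_update_neq)
  have di: "d!i = (\<not> c!i)" using lc i by (simp add: d_def)
  have key: "\<forall>x. length x = n \<longrightarrow> f x = ((x!i = c!i) = f c)"
  proof (intro allI impI)
    fix x :: "bool list" assume lx: "length x = n"
    show "f x = ((x!i = c!i) = f c)"
    proof (cases "x!i = c!i")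
      case True
      have "f x \<noteq> f d"
        by (rule lemA[OF ap h1 h2 hv1 hv2 lc ld lx ld ne[folded d_def]]) (use dd True in auto)
      thus ?thesis using True ne d_def by auto
    next
      case False
      have "f c \<noteq> f x"
        by (rule lemA[OF ap h1 h2 hv1 hv2 lc ld lc lx ne[folded d_def]]) (use dd False di in auto)
      thus ?thesis using False by auto
    qed
  qed
  show ?thesis
  proof (cases "c!i = f c")
    case True
    hence "\<forall>x. length x = n \<longrightarrow> f x = x!i" using key by auto
    thus ?thesis unfolding Omega1_def using i by blast
  next
    case False
    hence "\<forall>x. length x = n \<longrightarrow> f x = (\<not> x!i)" using key by auto
    thus ?thesis unfolding Omega1_def using i by blast
  qed
qed

lemma Omega_AP:
  assumes hR: "\<forall>p q r s. (p,q,r,s) \<in> R \<longrightarrow> (p = q \<longrightarrow> r = s)"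
    and om: "Omega1 n f"
  shows "AP R R1 n f"
  unfolding AP_R1
proof (intro allI impI)
  fix a b c d :: "bool list"
  assume l: "length a = n" "length b = n" "length c = n" "length d = n"
    and cols: "\<forall>i<n. (a ! i, b ! i, c ! i, d ! i) \<in> R" and eq: "f a = f b"
  from om show "f c = f d" unfolding Omega1_def
  proof (elim disjE exE conjE)
    fix v assume "\<forall>x. length x = n \<longrightarrow> f x = v" thus ?thesis using l by simp
  next
    fix i assume i: "i < n" and h: "\<forall>x. length x = n \<longrightarrow> f x = x ! i"
    thus ?thesis using l eq cols hR by metis
  next
    fix i assume i: "i < n" and h: "\<forall>x. length x = n \<longrightarrow> f x = (\<not> x ! i)"
    have "a!i = b!i" using h l eq by auto
    hence "c!i = d!i" using cols hR i by blast
    thus ?thesis using h l by simp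
  qed
qed

lemma R2_sub: "\<forall>p q r s. (p,q,r,s) \<in> R2 \<longrightarrow> (p = q \<longrightarrow> r = s)"
  by (auto simp: R2_def bt_def)
lemma R3_sub: "\<forall>p q r s. (p,q,r,s) \<in> R3 \<longrightarrow> (p = q \<longrightarrow> r = s)"
  by (auto simp: R3_def bt_def)

lemma R2_props: "(True,False,True,False) \<in> R2" "(False,True,False,True) \<in> R2"
  "\<forall>p. (False,False,p,p) \<in> R2" "\<forall>p q. (p,q,False,False) \<in> R2"
  by (auto simp: R2_def bt_def)

lemma R3_props: "(True,False,True,False) \<in> R3" "(False,True,False,True) \<in> R3"
  "\<forall>p. (True,True,p,p) \<in> R3" "\<forall>p q. (p,q,True,True) \<in> R3"
  by (auto simp: R3_def bt_def)

theorem mainTheorem13: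
  fixes n :: nat and f :: "bool list \<Rightarrow> bool"
  shows "(AP R2 R1 n f \<longleftrightarrow> AP R3 R1 n f) \<and> (AP R3 R1 n f \<longleftrightarrow> Omega1 n f)"
  using AP_Omega[OF _ R2_props] AP_Omega[OF _ R3_props]
    Omega_AP[OF R2_sub] Omega_AP[OF R3_sub] by blast

end
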